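(* Every almost reciprocal Puiseux monoid satisfies the ascending chain condition on principal ideals (ACCP).
   Context: A Puiseux monoid is an additive submonoid of $(\mathbb{Q}_{\ge 0},+)$. An almost reciprocal Puiseux monoid is a monoid of the form $\langle \frac{c_n}{d_n} \mid n \in \mathbb{N} \rangle$, where $(d_n)_{n\ge 1}$ is a strictly increasing sequence of positive integers whose terms are pairwise relatively prime, and $(c_n)_{n \ge 1}$ is a sequence of positive integers with $\gcd(c_n,d_n)=1$ for every $n$. A principal ideal of a monoid $M$ is a set $r + M = \{r+q \mid q \in M\}$ with $r \in M$; $M$ satisfies the ACCP if every ascending chain $r_1 + M \subseteq r_2 + M \subseteq \cdots$ of principal ideals is eventually constant. *)

theory Defs
  imports Main "HOL.Rat"
begin

inductive_set submonoid_gen :: "rat set \<Rightarrow> rat set" for A :: "rat set" where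
  zero: "0 \<in> submonoid_gen A"
| gen: "a \<in> A \<Longrightarrow> a \<in> submonoid_gen A"
| add: "x \<in> submonoid_gen A \<Longrightarrow> y \<in> submonoid_gen A \<Longrightarrow> x + y \<in> submonoid_gen A"

definition principal_ideal :: "rat set \<Rightarrow> rat \<Rightarrow> rat set" where
  "principal_ideal M r = {r + q | q. q \<in> M}"

definition ACCP :: "rat set \<Rightarrow> bool" where
  "ACCP M \<longleftrightarrow> (\<forall>r :: nat \<Rightarrow> rat.
      (\<forall>n. r n \<in> M) \<and> (\<forall>n. principal_ideal M (r n) \<subseteq> principal_ideal M (r (Suc n)))
      \<longrightarrow> (\<exists>N. \<forall>n\<ge>N. principal_ideal M (r n) = principal_ideal M (r N)))"

text \<open>Almost reciprocal Puiseux monoid with numerators c and denominators d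
  (sequences indexed from 0 instead of 1).\<close>
definition almost_reciprocal_PM :: "(nat \<Rightarrow> nat) \<Rightarrow> (nat \<Rightarrow> nat) \<Rightarrow> rat set" where
  "almost_reciprocal_PM c d = submonoid_gen (range (\<lambda>n. of_nat (c n) / of_nat (d n)))"

end

theory Submission
  imports Defs "HOL-Library.Multiset" "HOL-Library.Infinite_Set"
begin

lemma sum_mset_mult:
  fixes f :: "'a \<Rightarrow> 'b::comm_semiring_1"
  shows "(\<Sum>i\<in>#X. f i) = (\<Sum>i\<in>set_mset X. of_nat (count X i) * f i)"
proof (induction X)
  case empty then show ?case by simp
next
  case (add x X)
  show ?case
  proof (cases "x \<in># X")
    case True
    have "(\<Sum>i\<in>set_mset (add_mset x X). of_nat (count (add_mset x X) i) * f i)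
        = (\<Sum>i\<in>set_mset X. of_nat (count X i) * f i + (if i = x then f i else 0))"
      using True by (intro sum.cong) (auto simp: insert_absorb algebra_simps)
    also have "\<dots> = (\<Sum>i\<in>set_mset X. of_nat (count X i) * f i) + f x"
      using True by (simp add: sum.distrib)
    finally show ?thesis using add by (simp add: add.commute)
  next
    case False
    then have "count X x = 0" by (simp add: not_in_iff)
    have "(\<Sum>i\<in>set_mset X. of_nat (count (add_mset x X) i) * f i) = (\<Sum>i\<in>set_mset X. of_nat (count X i) * f i)"
      using False by (intro sum.cong) auto
    then show ?thesis using add False \<open>count X x = 0\<close> by (simp add: add.commute)
  qed
qed

lemma mem_repr:
  assumes "x \<in> submonoid_gen (range g)"
  shows "\<exists>X. x = (\<Sum>i\<in>#X. g i)"
  using assms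
proof (induction rule: submonoid_gen.induct)
  case zero
  then show ?case by (intro exI[of _ "{#}"]) simp
next
  case (gen a)
  then obtain i where "a = g i" by auto
  then show ?case by (intro exI[of _ "{#i#}"]) simp
next
  case (add x y)
  then obtain X Y where "x = (\<Sum>i\<in>#X. g i)" "y = (\<Sum>i\<in>#Y. g i)" by blast
  then show ?case by (intro exI[of _ "X + Y"]) simp
qed

lemma ge_count:
  fixes g :: "nat \<Rightarrow> rat"
  assumes "\<And>i. g i \<ge> 0" and "T \<subseteq> set_mset X"
  shows "(\<Sum>i\<in>T. of_nat (count X i) * g i) \<le> (\<Sum>i\<in>#X. g i)"
  unfolding sum_mset_mult[of g X]
  by (rule sum_mono2) (use assms in auto)

lemma repr_nonneg:
  fixes g :: "nat \<Rightarrow> rat"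
  assumes "\<And>i. g i \<ge> 0"
  shows "(\<Sum>i\<in>#X. g i) \<ge> 0"
  using ge_count[of g "{}" X] assms by simp

lemma sum_mset_sum:
  fixes g :: "nat \<Rightarrow> rat" and m :: nat and Q :: "nat \<Rightarrow> nat multiset"
  shows "(\<Sum>i\<in>#(\<Sum>k<m. Q k). g i) = (\<Sum>k<m. (\<Sum>i\<in>#Q k. g i))"
  by (induction m) auto

lemma key:
  fixes c d :: "nat \<Rightarrow> nat" and X :: "nat multiset" and b :: nat and a :: int
  assumes dpos: "\<And>n. 0 < d n" and cop: "\<And>m n. m \<noteq> n \<Longrightarrow> coprime (d m) (d n)"
    and ccop: "\<And>n. coprime (c n) (d n)"
    and eq: "(\<Sum>i\<in>set_mset X. of_nat (count X i) * (of_nat (c i) / of_nat (d i)) :: rat) * of_nat b = of_int a"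
    and cb: "coprime (d j) b" and j: "j \<in># X"
  shows "d j dvd count X j"
proof -
  define F where "F = set_mset X"
  have fin: "finite F" by (simp add: F_def)
  have jF: "j \<in> F" using j by (simp add: F_def)
  define P where "P i = (\<Prod>k\<in>F-{i}. d k)" for i
  define Q where "Q = (\<Prod>k\<in>F. d k)"
  define T where "T i = count X i * c i * b * P i" for i
  have QP: "Q = d i * P i" if "i \<in> F" for i
    using that fin by (simp add: Q_def P_def prod.remove)
  have trm: "of_nat (count X i) * (of_nat (c i) / of_nat (d i)) * of_nat b * of_nat Q = (of_nat (T i) :: rat)"
    if "i \<in> F" for i
  proof -
    have "d i > 0" using dpos by auto
    then show ?thesis using QP[OF that] by (simp add: T_def field_simps)
  qed
  have "of_int (a * int Q) = (of_nat (\<Sum>i\<in>F. T i) :: rat)"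
  proof -
    have "of_int (a * int Q) = (\<Sum>i\<in>F. of_nat (count X i) * (of_nat (c i) / of_nat (d i))) * of_nat b * (of_nat Q :: rat)"
      using eq by (simp add: F_def)
    also have "\<dots> = (\<Sum>i\<in>F. of_nat (count X i) * (of_nat (c i) / of_nat (d i)) * of_nat b * of_nat Q)"
      by (simp add: sum_distrib_right)
    also have "\<dots> = (\<Sum>i\<in>F. of_nat (T i))" using trm by (intro sum.cong) auto
    finally show ?thesis by simp
  qed
  then have aQ: "a * int Q = int (\<Sum>i\<in>F. T i)"
    by (metis of_int_eq_iff of_int_of_nat_eq)
  have "d j dvd Q" using fin jF by (simp add: Q_def dvd_prodI)
  then have "int (d j) dvd int (\<Sum>i\<in>F. T i)" unfolding aQ[symmetric] by simp
  then have dsum: "d j dvd (\<Sum>i\<in>F. T i)" by (simp only: int_dvd_int_iff)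
  have spl: "(\<Sum>i\<in>F. T i) = T j + (\<Sum>i\<in>F-{j}. T i)"
    using fin jF by (simp add: sum.remove)
  have "d j dvd (\<Sum>i\<in>F-{j}. T i)"
  proof (rule dvd_sum)
    fix i assume "i \<in> F - {j}"
    then have "d j dvd P i" using fin jF by (auto simp: P_def intro!: dvd_prodI)
    then show "d j dvd T i" by (simp add: T_def)
  qed
  with dsum spl have "d j dvd T j" by (metis dvd_add_left_iff)
  moreover have "coprime (d j) (P j)" unfolding P_def
    by (rule prod_coprime_right) (use cop in auto)
  moreover have "coprime (d j) (c j)" using ccop by (simp add: coprime_commute)
  ultimately show ?thesis using cb unfolding T_def
    by (simp add: coprime_dvd_mult_left_iff)
qed


theorem theorem4p5:
  fixes c d :: "nat \<Rightarrow> nat"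
  assumes "\<And>n. 0 < d n"
    and "strict_mono d"
    and "\<And>m n. m \<noteq> n \<Longrightarrow> coprime (d m) (d n)"
    and "\<And>n. 0 < c n"
    and "\<And>n. coprime (c n) (d n)"
  shows "ACCP (almost_reciprocal_PM c d)"
proof -
  note dpos = assms(1) and cop = assms(3) and cpos = assms(4) and ccop = assms(5)
  define g where "g i = (of_nat (c i) / of_nat (d i) :: rat)" for i
  define M where "M = almost_reciprocal_PM c d"
  have M_def': "M = submonoid_gen (range g)"
    by (simp add: M_def almost_reciprocal_PM_def g_def)
  have gpos: "g i > 0" for i using dpos[of i] cpos[of i] by (simp add: g_def)
  have gnn: "g i \<ge> 0" for i using gpos[of i] by simp
  show ?thesis unfolding ACCP_def M_def[symmetric]
  proof (intro allI impI)
    fix r :: "nat \<Rightarrow> rat"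
    assume "(\<forall>n. r n \<in> M) \<and> (\<forall>n. principal_ideal M (r n) \<subseteq> principal_ideal M (r (Suc n)))"
    then have rM: "\<And>n. r n \<in> M" and incl: "\<And>n. principal_ideal M (r n) \<subseteq> principal_ideal M (r (Suc n))"
      by auto
    have "\<exists>q. q \<in> M \<and> r n = r (Suc n) + q" for n
    proof -
      have "0 \<in> M" unfolding M_def' by (rule submonoid_gen.zero)
      then have "r n \<in> principal_ideal M (r n)" unfolding principal_ideal_def by force
      then have "r n \<in> principal_ideal M (r (Suc n))" using incl by blast
      then show ?thesis unfolding principal_ideal_def by blast
    qed
    then have "\<forall>n. \<exists>q. q \<in> M \<and> r n = r (Suc n) + q" by blast
    then have "\<exists>q. \<forall>n. q n \<in> M \<and> r n = r (Suc n) + q n" by (rule choice)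
    then obtain q where q0: "\<forall>n. q n \<in> M \<and> r n = r (Suc n) + q n" by blast
    then have q: "\<And>n. q n \<in> M" "\<And>n. r n = r (Suc n) + q n" by blast+
    have tel: "r 0 = r m + (\<Sum>k<m. q k)" for m
    proof (induction m)
      case 0 then show ?case by simp
    next
      case (Suc m) then show ?case using q(2)[of m] by simp
    qed
    have "\<forall>k. \<exists>X. q k = (\<Sum>i\<in>#X. g i)"
      using mem_repr q(1) unfolding M_def' by blast
    then have "\<exists>Q. \<forall>k. q k = (\<Sum>i\<in>#Q k. g i)" by (rule choice)
    then obtain Q where Q0: "\<forall>k. q k = (\<Sum>i\<in>#Q k. g i)" by blast
    then have Q: "\<And>k. q k = (\<Sum>i\<in>#Q k. g i)" by blast
    have "\<forall>k. \<exists>X. r k = (\<Sum>i\<in>#X. g i)"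
      using mem_repr rM unfolding M_def' by blast
    then have "\<exists>R. \<forall>k. r k = (\<Sum>i\<in>#R k. g i)" by (rule choice)
    then obtain R where R0: "\<forall>k. r k = (\<Sum>i\<in>#R k. g i)" by blast
    then have R: "\<And>k. r k = (\<Sum>i\<in>#R k. g i)" by blast
    have qnn: "q k \<ge> 0" for k using Q[of k] repr_nonneg[of g "Q k"] gnn by simp
    have rnn: "r k \<ge> 0" for k using R[of k] repr_nonneg[of g "R k"] gnn by simp
    have r0X: "r 0 = (\<Sum>i\<in>#(R m + (\<Sum>k<m. Q k)). g i)" for m
      using tel[of m] by (simp add: R Q sum_mset_sum)
    obtain a bi where qa: "quotient_of (r 0) = (a, bi)" by fastforce
    have bipos: "bi > 0" using quotient_of_denom_pos[OF qa] .
    define b where "b = nat bi"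
    have bpos: "b > 0" using bipos by (simp add: b_def)
    have e1: "r 0 = of_int a / of_int bi" by (rule quotient_of_div[OF qa])
    have e2: "(of_nat b :: rat) = of_int bi" using bipos by (simp add: b_def)
    have r0b: "r 0 * of_nat b = of_int a"
      unfolding e2 e1 using bipos by simp
    define S where "S = {i. \<not> coprime (d i) b}"
    have finS: "finite S"
    proof -
      have "inj_on (\<lambda>i. gcd (d i) b) S"
      proof (rule inj_onI)
        fix i j assume i: "i \<in> S" and j: "j \<in> S" and e: "gcd (d i) b = gcd (d j) b"
        show "i = j"
        proof (rule ccontr)
          assume "i \<noteq> j"
          then have "coprime (d i) (d j)" using cop by blast
          moreover have "gcd (d i) b dvd d i" by simp
          moreover have "gcd (d i) b dvd d j" unfolding e by simp
          ultimately have "is_unit (gcd (d i) b)" by (rule coprime_common_divisor)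
          then have "coprime (d i) b" by (simp add: coprime_iff_gcd_eq_1)
          then show False using i by (simp add: S_def)
        qed
      qed
      moreover have "(\<lambda>i. gcd (d i) b) ` S \<subseteq> {..b}"
      proof
        fix x assume "x \<in> (\<lambda>i. gcd (d i) b) ` S"
        then obtain i where "x = gcd (d i) b" by blast
        then show "x \<in> {..b}" using gcd_le2_nat[OF bpos[THEN gr_implies_not0], of "d i"] by simp
      qed
      then have "finite ((\<lambda>i. gcd (d i) b) ` S)" by (rule finite_subset) simp
      ultimately show ?thesis using finite_imageD by blast
    qed
    define J where "J = (\<Union>k. set_mset (Q k))"
    have finJ: "finite J"
    proof (rule ccontr)
      assume "infinite J"
      then have inf: "infinite (J - S)" using finS by simp
      define t where "t = nat \<lceil>r 0\<rceil> + 1"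
      obtain T where T: "finite T" "card T = t" "T \<subseteq> J - S"
        using infinite_arbitrarily_large[OF inf] by blast
      have "\<forall>j\<in>T. \<exists>k. j \<in># Q k" using T(3) by (auto simp: J_def)
      then have "\<exists>kk. \<forall>j\<in>T. j \<in># Q (kk j)" by (rule bchoice)
      then obtain kk where kk0: "\<forall>j\<in>T. j \<in># Q (kk j)" by blast
      then have kk: "\<And>j. j \<in> T \<Longrightarrow> j \<in># Q (kk j)" by blast
      define m where "m = Suc (Max (kk ` T))"
      define X where "X = R m + (\<Sum>k<m. Q k)"
      have TX: "T \<subseteq> set_mset X"
      proof
        fix j assume j: "j \<in> T"
        have "kk j \<le> Max (kk ` T)" using j T(1) by (intro Max_ge) auto
        then have km: "kk j < m" by (simp add: m_def)
        have "(\<Sum>k<m. Q k) = Q (kk j) + (\<Sum>k\<in>{..<m}-{kk j}. Q k)"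
          using km by (simp add: sum.remove)
        then have "j \<in># (\<Sum>k<m. Q k)" using kk[OF j] by simp
        then show "j \<in> set_mset X" by (simp add: X_def)
      qed
      have r0X': "r 0 = (\<Sum>i\<in>#X. g i)" unfolding X_def by (rule r0X)
      have big: "1 \<le> of_nat (count X j) * g j" if j: "j \<in> T" for j
      proof -
        have jX: "j \<in># X" using TX j by auto
        have cj: "coprime (d j) b" using T(3) j by (auto simp: S_def)
        have eq: "(\<Sum>i\<in>set_mset X. of_nat (count X i) * (of_nat (c i) / of_nat (d i)) :: rat) * of_nat b = of_int a"
          using r0b r0X' sum_mset_mult[of g X] by (simp add: g_def)
        have "d j dvd count X j"
          by (rule key[OF dpos cop ccop eq cj jX])
        moreover have "count X j > 0" using jX by simp
        ultimately have "d j \<le> count X j" by (simp add: dvd_imp_le)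
        then have "of_nat (d j) * g j \<le> of_nat (count X j) * g j"
          using gnn[of j] by (simp add: mult_right_mono)
        moreover have "of_nat (d j) * g j = of_nat (c j)" using dpos[of j] by (simp add: g_def)
        moreover have "(1::rat) \<le> of_nat (c j)" using cpos[of j] by simp
        ultimately show ?thesis by linarith
      qed
      have "of_nat t = (\<Sum>j\<in>T. (1::rat))" using T(2) by simp
      also have "\<dots> \<le> (\<Sum>j\<in>T. of_nat (count X j) * g j)" by (rule sum_mono) (use big in auto)
      also have "\<dots> \<le> r 0" unfolding r0X' by (rule ge_count[OF gnn TX])
      finally have "of_nat t \<le> r 0" .
      moreover have "r 0 < of_nat t"
      proof -
        have c0: "\<lceil>r 0\<rceil> \<ge> 0" using rnn[of 0] by simp
        have "r 0 \<le> of_int \<lceil>r 0\<rceil>" by (rule le_of_int_ceiling)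
        moreover have "(of_nat t :: rat) = of_int \<lceil>r 0\<rceil> + 1" unfolding t_def using c0 by simp
        ultimately show ?thesis by linarith
      qed
      ultimately show False by simp
    qed
    have "\<exists>N. \<forall>n\<ge>N. q n = 0"
    proof (rule ccontr)
      assume "\<not> (\<exists>N. \<forall>n\<ge>N. q n = 0)"
      then have infK: "infinite {n. q n \<noteq> 0}" unfolding infinite_nat_iff_unbounded_le by auto
      then have "{n. q n \<noteq> 0} \<noteq> {}" by (metis finite.emptyI)
      then obtain n0 where "q n0 \<noteq> 0" by blast
      then have "Q n0 \<noteq> {#}" using Q[of n0] by auto
      then have Jne: "J \<noteq> {}" by (auto simp: J_def)
      define e where "e = Min (g ` J)"
      have epos: "e > 0" unfolding e_def using finJ Jne gpos by (subst Min_gr_iff) auto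
      have qe: "e \<le> q k" if "q k \<noteq> 0" for k
      proof -
        from that have "Q k \<noteq> {#}" using Q[of k] by auto
        then obtain j where j: "j \<in># Q k" by blast
        then have "j \<in> J" by (auto simp: J_def)
        then have "e \<le> g j" unfolding e_def using finJ by (intro Min_le) auto
        also have "g j \<le> of_nat (count (Q k) j) * g j"
        proof -
          have "1 \<le> count (Q k) j" using j by (simp add: Suc_le_eq)
          then have "(1::rat) \<le> of_nat (count (Q k) j)" by simp
          then show ?thesis using mult_right_mono[of 1 "of_nat (count (Q k) j)" "g j"] gnn[of j] by simp
        qed
        also have "\<dots> \<le> q k" using ge_count[OF gnn, of "{j}" "Q k"] j Q[of k] by simp
        finally show ?thesis .
      qed
      define t where "t = nat \<lceil>r 0 / e\<rceil> + 1"
      obtain K where K: "finite K" "card K = t" "K \<subseteq> {n. q n \<noteq> 0}"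
        using infinite_arbitrarily_large[OF infK] by blast
      define m where "m = Suc (Max K)"
      have Km: "K \<subseteq> {..<m}"
      proof
        fix k assume "k \<in> K"
        then have "k \<le> Max K" using K(1) by (intro Max_ge) auto
        then show "k \<in> {..<m}" by (simp add: m_def)
      qed
      have "of_nat t * e = (\<Sum>k\<in>K. e)" using K(2) by simp
      also have "\<dots> \<le> (\<Sum>k\<in>K. q k)" by (rule sum_mono) (use K(3) qe in auto)
      also have "\<dots> \<le> (\<Sum>k<m. q k)" by (rule sum_mono2) (use Km qnn in auto)
      also have "\<dots> \<le> r 0" using tel[of m] rnn[of m] by linarith
      finally have le: "of_nat t * e \<le> r 0" .
      have "r 0 / e < of_nat t"
      proof -
        have "0 \<le> r 0 / e" using rnn[of 0] epos by simp
        then have c0: "\<lceil>r 0 / e\<rceil> \<ge> 0" by simp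
        have "r 0 / e \<le> of_int \<lceil>r 0 / e\<rceil>" by (rule le_of_int_ceiling)
        moreover have "(of_nat t :: rat) = of_int \<lceil>r 0 / e\<rceil> + 1" unfolding t_def using c0 by simp
        ultimately show ?thesis by linarith
      qed
      then have "r 0 < of_nat t * e" using epos by (simp add: divide_less_eq)
      with le show False by simp
    qed
    then obtain N where N: "\<And>n. n \<ge> N \<Longrightarrow> q n = 0" by blast
    have "r n = r N" if "n \<ge> N" for n
      using that
    proof (induction n rule: dec_induct)
      case base then show ?case by simp
    next
      case (step n)
      have "q n = 0" using N step.hyps(1) by blast
      then have "r (Suc n) = r n" using q(2)[of n] by simp
      with step.IH show ?case by simp
    qed
    then have rN: "\<forall>n\<ge>N. r n = r N" by blast
    show "\<exists>N. \<forall>n\<ge>N. principal_ideal M (r n) = principal_ideal M (r N)"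
    proof (intro exI[of _ N] allI impI)
      fix n assume "n \<ge> N"
      then have "r n = r N" using rN by blast
      then show "principal_ideal M (r n) = principal_ideal M (r N)" by (simp only:)
    qed
  qed
qed

end
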